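(* For any $\alpha\in(0,1)$ and any $q>0$ there exist positive definite $2\times2$ matrices $A,B$ such that $LE_\alpha(A,B)\not\le\mathcal{A}_{\alpha,q}(A,B)$, where $LE_\alpha(A,B):=\exp((1-\alpha)\log A+\alpha\log B)$ and $\mathcal{A}_{\alpha,q}(A,B):=((1-\alpha)A^q+\alpha B^q)^{1/q}$.
   Context: $\le$ denotes the Loewner order on Hermitian matrices ($X\le Y$ iff $Y-X$ is positive semidefinite). *)

theory Defs
  imports "HOL-Analysis.Analysis"
begin

definition adjoint_mat :: "complex^'n^'m \<Rightarrow> complex^'m^'n" where
  "adjoint_mat A = (\<chi> i j. cnj (A $ j $ i))"

definition hermitian_mat :: "complex^'n^'n \<Rightarrow> bool" where
  "hermitian_mat A \<longleftrightarrow> adjoint_mat A = A"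

definition unitary_mat :: "complex^'n^'n \<Rightarrow> bool" where
  "unitary_mat U \<longleftrightarrow> adjoint_mat U ** U = mat 1"

definition diag_mat :: "('n::finite \<Rightarrow> complex) \<Rightarrow> complex^'n^'n" where
  "diag_mat d = (\<chi> i j. if i = j then d i else 0)"

definition qform :: "complex^'n^'n \<Rightarrow> complex^'n \<Rightarrow> complex" where
  "qform M v = (\<Sum>i\<in>UNIV. cnj (v $ i) * (M *v v) $ i)"

definition posdef_mat :: "complex^'n^'n \<Rightarrow> bool" where
  "posdef_mat A \<longleftrightarrow> hermitian_mat A \<and> (\<forall>v. v \<noteq> 0 \<longrightarrow> Re (qform A v) > 0)"

definition psd_mat :: "complex^'n^'n \<Rightarrow> bool" where
  "psd_mat A \<longleftrightarrow> hermitian_mat A \<and> (\<forall>v. Re (qform A v) \<ge> 0)"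

definition loewner_le :: "complex^'n^'n \<Rightarrow> complex^'n^'n \<Rightarrow> bool" where
  "loewner_le X Y \<longleftrightarrow> psd_mat (Y - X)"

text \<open>Functional calculus for Hermitian matrices via spectral decomposition
  A = U diag(d) U^*: f(A) = U diag(f o d) U^* (independent of the decomposition).\<close>
definition mat_fun :: "(real \<Rightarrow> real) \<Rightarrow> complex^'n^'n \<Rightarrow> complex^'n^'n" where
  "mat_fun f A = (SOME M. \<exists>U (d::'n \<Rightarrow> real). unitary_mat U \<and>
      A = U ** diag_mat (\<lambda>i. complex_of_real (d i)) ** adjoint_mat U \<and>
      M = U ** diag_mat (\<lambda>i. complex_of_real (f (d i))) ** adjoint_mat U)"

definition mat_exp :: "complex^'n^'n \<Rightarrow> complex^'n^'n" where
  "mat_exp A = mat_fun exp A"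

definition mat_log :: "complex^'n^'n \<Rightarrow> complex^'n^'n" where
  "mat_log A = mat_fun ln A"

definition mat_powr :: "complex^'n^'n \<Rightarrow> real \<Rightarrow> complex^'n^'n" where
  "mat_powr A p = mat_fun (\<lambda>x. x powr p) A"

definition LE_mean :: "real \<Rightarrow> complex^'n^'n \<Rightarrow> complex^'n^'n \<Rightarrow> complex^'n^'n" where
  "LE_mean \<alpha> A B = mat_exp ((1 - \<alpha>) *\<^sub>R mat_log A + \<alpha> *\<^sub>R mat_log B)"

definition power_mean :: "real \<Rightarrow> real \<Rightarrow> complex^'n^'n \<Rightarrow> complex^'n^'n \<Rightarrow> complex^'n^'n" where
  "power_mean \<alpha> q A B = mat_powr ((1 - \<alpha>) *\<^sub>R mat_powr A q + \<alpha> *\<^sub>R mat_powr B q) (1 / q)"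

end

theory Submission
  imports Defs
begin


lemma mult_diag_right: "(W ** diag_mat g) $ i $ j = W $ i $ j * g j"
  unfolding diag_mat_def matrix_matrix_mult_def
  by (simp add: if_distrib[of "\<lambda>x. _ * x"] cong: if_cong)

lemma mult_diag_left: "(diag_mat g ** W) $ i $ j = g i * W $ i $ j"
  unfolding diag_mat_def matrix_matrix_mult_def
  by (simp add: if_distrib[of "\<lambda>x. x * _"] cong: if_cong)

lemma unitary_right:
  fixes U :: "complex^'n^'n"
  assumes "unitary_mat U" shows "U ** adjoint_mat U = mat 1"
  using assms unfolding unitary_mat_def using matrix_left_right_inverse by blast

lemma mat_fun_unique:
  fixes U V :: "complex^'n^'n" and d e :: "'n \<Rightarrow> real"
  assumes U: "unitary_mat U" and V: "unitary_mat V"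
    and eq: "U ** diag_mat (\<lambda>i. complex_of_real (d i)) ** adjoint_mat U =
             V ** diag_mat (\<lambda>i. complex_of_real (e i)) ** adjoint_mat V"
  shows "U ** diag_mat (\<lambda>i. complex_of_real (f (d i))) ** adjoint_mat U =
         V ** diag_mat (\<lambda>i. complex_of_real (f (e i))) ** adjoint_mat V"
proof -
  define W where "W = adjoint_mat V ** U"
  define Dd where "Dd = diag_mat (\<lambda>i. complex_of_real (d i))"
  define De where "De = diag_mat (\<lambda>i. complex_of_real (e i))"
  define Fd where "Fd = diag_mat (\<lambda>i. complex_of_real (f (d i)))"
  define Fe where "Fe = diag_mat (\<lambda>i. complex_of_real (f (e i)))"
  have UU: "adjoint_mat U ** U = mat 1" and VV: "adjoint_mat V ** V = mat 1"
    using U V unfolding unitary_mat_def by auto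
  have UU': "U ** adjoint_mat U = mat 1" and VV': "V ** adjoint_mat V = mat 1"
    using U V unitary_right by auto
  have "W ** Dd = adjoint_mat V ** U ** Dd ** (adjoint_mat U ** U)"
    unfolding W_def by (simp add: UU)
  also have "\<dots> = adjoint_mat V ** (U ** Dd ** adjoint_mat U) ** U"
    by (simp add: matrix_mul_assoc)
  also have "\<dots> = adjoint_mat V ** (V ** De ** adjoint_mat V) ** U"
    using eq unfolding Dd_def De_def by simp
  also have "\<dots> = (adjoint_mat V ** V) ** De ** W"
    unfolding W_def by (simp add: matrix_mul_assoc)
  also have "\<dots> = De ** W"
    by (simp add: VV)
  finally have WD: "W ** Dd = De ** W" .
  have WF: "W ** Fd = Fe ** W"
  proof -
    have "(W ** Fd) $ i $ j = (Fe ** W) $ i $ j" for i j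
    proof -
      have "W $ i $ j * complex_of_real (d j) = complex_of_real (e i) * W $ i $ j"
        using arg_cong[OF WD, of "\<lambda>M. M $ i $ j"]
        unfolding Dd_def De_def mult_diag_right mult_diag_left .
      then have "W $ i $ j = 0 \<or> d j = e i"
        by (metis mult.commute mult_cancel_left of_real_eq_iff)
      then show ?thesis unfolding Fd_def Fe_def mult_diag_right mult_diag_left
        by (auto simp: mult.commute)
    qed
    then show ?thesis by (simp add: vec_eq_iff)
  qed
  have "U ** Fd ** adjoint_mat U = (V ** adjoint_mat V) ** U ** Fd ** adjoint_mat U"
    by (simp add: VV')
  also have "\<dots> = V ** (W ** Fd) ** adjoint_mat U"
    unfolding W_def by (simp add: matrix_mul_assoc)
  also have "\<dots> = V ** (Fe ** W) ** adjoint_mat U"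
    by (simp only: WF)
  also have "\<dots> = V ** Fe ** adjoint_mat V ** (U ** adjoint_mat U)"
    unfolding W_def by (simp add: matrix_mul_assoc)
  also have "\<dots> = V ** Fe ** adjoint_mat V"
    by (simp add: UU')
  finally show ?thesis unfolding Fd_def Fe_def .
qed

lemma mat_fun_eq:
  fixes U :: "complex^'n^'n" and d :: "'n \<Rightarrow> real"
  assumes U: "unitary_mat U"
  shows "mat_fun f (U ** diag_mat (\<lambda>i. complex_of_real (d i)) ** adjoint_mat U) =
         U ** diag_mat (\<lambda>i. complex_of_real (f (d i))) ** adjoint_mat U"
proof -
  let ?A = "U ** diag_mat (\<lambda>i. complex_of_real (d i)) ** adjoint_mat U"
  let ?P = "\<lambda>M. \<exists>V (e::'n \<Rightarrow> real). unitary_mat V \<and>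
      ?A = V ** diag_mat (\<lambda>i. complex_of_real (e i)) ** adjoint_mat V \<and>
      M = V ** diag_mat (\<lambda>i. complex_of_real (f (e i))) ** adjoint_mat V"
  have ex: "?P (U ** diag_mat (\<lambda>i. complex_of_real (f (d i))) ** adjoint_mat U)"
    using U by blast
  have exM: "\<exists>M. ?P M" using ex by blast
  have "?P (mat_fun f ?A)" unfolding mat_fun_def using someI_ex[OF exM] .
  then obtain V e where V: "unitary_mat V"
    and eq: "?A = V ** diag_mat (\<lambda>i. complex_of_real (e i)) ** adjoint_mat V"
    and M: "mat_fun f ?A = V ** diag_mat (\<lambda>i. complex_of_real (f (e i))) ** adjoint_mat V"
    by blast
  show ?thesis unfolding M using mat_fun_unique[OF U V eq, of f] by simp
qed



definition rotU :: "real \<Rightarrow> complex^2^2" where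
  "rotU g = (\<chi> i j. complex_of_real (if i = 1 then (if j = 1 then cos g else - sin g)
                                     else (if j = 1 then sin g else cos g)))"

definition dvals :: "real \<Rightarrow> real \<Rightarrow> 2 \<Rightarrow> real" where
  "dvals a b = (\<lambda>i. if i = 1 then a else b)"

definition symR :: "real \<Rightarrow> real \<Rightarrow> real \<Rightarrow> complex^2^2" where
  "symR g a b = rotU g ** diag_mat (\<lambda>i. complex_of_real (dvals a b i)) ** adjoint_mat (rotU g)"

definition mk2 :: "real \<Rightarrow> real \<Rightarrow> real \<Rightarrow> real \<Rightarrow> complex^2^2" where
  "mk2 a b c d = (\<chi> i j. complex_of_real (if i = 1 then (if j = 1 then a else b)
                                     else (if j = 1 then c else d)))"

lemma two_neq: "(1::2) \<noteq> 2" by simp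

lemma mk2_eq_iff: "mk2 a b c d = mk2 a' b' c' d' \<longleftrightarrow> a = a' \<and> b = b' \<and> c = c' \<and> d = d'"
  unfolding mk2_def vec_eq_iff forall_2 by simp

lemma unitary_rotU: "unitary_mat (rotU g)"
  unfolding unitary_mat_def rotU_def adjoint_mat_def
  by (simp add: vec_eq_iff forall_2 matrix_matrix_mult_def sum_2 mat_def
        flip: of_real_mult of_real_add)

lemma mat_fun_symR: "mat_fun f (symR g a b) = symR g (f a) (f b)"
proof -
  have e: "\<And>i. f (dvals a b i) = dvals (f a) (f b) i"
    unfolding dvals_def by auto
  show ?thesis unfolding symR_def using mat_fun_eq[OF unitary_rotU, of f g "dvals a b"]
    by (simp only: e)
qed

lemma symR_mk2: "symR g a b = mk2 (a * (cos g)\<^sup>2 + b * (sin g)\<^sup>2) ((a - b) * cos g * sin g)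
   ((a - b) * cos g * sin g) (a * (sin g)\<^sup>2 + b * (cos g)\<^sup>2)"
  unfolding symR_def mk2_def rotU_def adjoint_mat_def diag_mat_def dvals_def
  by (simp add: vec_eq_iff forall_2 matrix_matrix_mult_def sum_2 power2_eq_square algebra_simps
        flip: of_real_mult of_real_add of_real_diff)

lemma mk2_scaleR: "r *\<^sub>R mk2 a b c d = mk2 (r*a) (r*b) (r*c) (r*d)"
  unfolding mk2_def by (simp add: vec_eq_iff forall_2 of_real_def)

lemma mk2_add: "mk2 a b c d + mk2 a' b' c' d' = mk2 (a+a') (b+b') (c+c') (d+d')"
  unfolding mk2_def by (simp add: vec_eq_iff forall_2)

lemma mk2_diff: "mk2 a b c d - mk2 a' b' c' d' = mk2 (a-a') (b-b') (c-c') (d-d')"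
  unfolding mk2_def by (simp add: vec_eq_iff forall_2)

lemma qform_mk2: "qform (mk2 a b b d) v =
   of_real a * (cnj (v$1) * v$1) + of_real b * (cnj (v$1) * v$2 + cnj (v$2) * v$1)
   + of_real d * (cnj (v$2) * v$2)"
  unfolding qform_def mk2_def
  by (simp add: sum_2 matrix_vector_mult_def algebra_simps)

lemma qform_symR: "qform (symR g a b) v =
   of_real a * (cnj (of_real (cos g) * v$1 + of_real (sin g) * v$2) * (of_real (cos g) * v$1 + of_real (sin g) * v$2))
 + of_real b * (cnj (of_real (sin g) * v$1 - of_real (cos g) * v$2) * (of_real (sin g) * v$1 - of_real (cos g) * v$2))"
  unfolding symR_mk2 qform_mk2
  by (simp add: power2_eq_square algebra_simps)

lemma adjoint_mk2: "adjoint_mat (mk2 a b c d) = mk2 a c b d"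
  unfolding adjoint_mat_def mk2_def by (simp add: vec_eq_iff forall_2)

lemma hermitian_symR: "hermitian_mat (symR g a b)"
  unfolding hermitian_mat_def symR_mk2 adjoint_mk2 by simp

lemma cnj_mult_self: "cnj z * z = complex_of_real ((cmod z)\<^sup>2)"
  using complex_norm_square[of z] by (simp add: mult.commute)

lemma posdef_symR:
  assumes a: "a > 0" and b: "b > 0"
  shows "posdef_mat (symR g a b)"
  unfolding posdef_mat_def
proof (intro conjI allI impI hermitian_symR)
  fix v :: "complex^2" assume v: "v \<noteq> 0"
  define x where "x = of_real (cos g) * v$1 + of_real (sin g) * v$2"
  define y where "y = of_real (sin g) * v$1 - of_real (cos g) * v$2"
  have q: "Re (qform (symR g a b) v) = a * (cmod x)\<^sup>2 + b * (cmod y)\<^sup>2"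
    unfolding qform_symR x_def[symmetric] y_def[symmetric] cnj_mult_self
    by simp
  have "x \<noteq> 0 \<or> y \<noteq> 0"
  proof (rule ccontr)
    assume "\<not> (x \<noteq> 0 \<or> y \<noteq> 0)"
    then have x0: "x = 0" and y0: "y = 0" by auto
    have cs1: "complex_of_real (cos g) * of_real (cos g) + of_real (sin g) * of_real (sin g) = 1"
    proof -
      have "complex_of_real (cos g * cos g + sin g * sin g) = 1" by (simp only: sin_cos_squared_add3 of_real_1)
      then show ?thesis by (simp only: of_real_add of_real_mult)
    qed
    have h1: "of_real (cos g) * x + of_real (sin g) * y = (of_real (cos g) * of_real (cos g) + of_real (sin g) * of_real (sin g)) * v$1"
      unfolding x_def y_def
      by (simp add: algebra_simps)
    have h2: "of_real (sin g) * x - of_real (cos g) * y = (of_real (cos g) * of_real (cos g) + of_real (sin g) * of_real (sin g)) * v$2"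
      unfolding x_def y_def
      by (simp add: algebra_simps)
    have "v$1 = 0" "v$2 = 0" using h1 h2 x0 y0 unfolding cs1 by auto
    then have "v = 0" by (simp add: vec_eq_iff forall_2)
    then show False using v by simp
  qed
  then have "a * (cmod x)\<^sup>2 + b * (cmod y)\<^sup>2 > 0"
    using a b by (auto intro: add_pos_nonneg add_nonneg_pos)
  then show "Re (qform (symR g a b) v) > 0" using q by simp
qed

lemma sym_decomp:
  fixes a b d :: real
  obtains g where "mk2 a b b d = symR g ((a+d)/2 + sqrt (((a-d)/2)\<^sup>2 + b\<^sup>2)) ((a+d)/2 - sqrt (((a-d)/2)\<^sup>2 + b\<^sup>2))"
    "sqrt (((a-d)/2)\<^sup>2 + b\<^sup>2) * cos (2*g) = (a-d)/2"
    "sqrt (((a-d)/2)\<^sup>2 + b\<^sup>2) * sin (2*g) = b"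
proof -
  define r where "r = sqrt (((a-d)/2)\<^sup>2 + b\<^sup>2)"
  define c where "c = (a+d)/2"
  have key: "\<exists>g. r * cos (2*g) = (a-d)/2 \<and> r * sin (2*g) = b"
  proof (cases "r = 0")
    case True
    then have "(a-d)/2 = 0" "b = 0" unfolding r_def by (auto simp: power2_eq_square add_nonneg_eq_0_iff)
    then show ?thesis using True by auto
  next
    case False
    have "r \<ge> 0" unfolding r_def by simp
    then have rpos: "r > 0" using False by linarith
    have r2: "r\<^sup>2 = ((a-d)/2)\<^sup>2 + b\<^sup>2" unfolding r_def by simp
    have "((a-d)/2/r)\<^sup>2 + (b/r)\<^sup>2 = (((a-d)/2)\<^sup>2 + b\<^sup>2)/r\<^sup>2"
      by (simp add: power_divide add_divide_distrib)
    also have "\<dots> = 1" unfolding r2[symmetric] using rpos by simp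
    finally have "((a-d)/2/r)\<^sup>2 + (b/r)\<^sup>2 = 1" .
    then obtain t where t: "(a-d)/2/r = cos t" "b/r = sin t" by (rule sincos_total_2pi)
    show ?thesis
      by (rule exI[of _ "t/2"]) (use t rpos in \<open>auto simp: field_simps\<close>)
  qed
  then obtain g where g: "r * cos (2*g) = (a-d)/2" "r * sin (2*g) = b" by blast
  have c2: "cos (2*g) = (cos g)\<^sup>2 - (sin g)\<^sup>2" by (rule cos_double)
  have s2: "sin (2*g) = 2 * sin g * cos g" by (rule sin_double)
  have one: "(cos g)\<^sup>2 + (sin g)\<^sup>2 = 1" by simp
  have "mk2 a b b d = symR g (c + r) (c - r)"
    unfolding symR_mk2 mk2_eq_iff
  proof (intro conjI)
    show "a = (c + r) * (cos g)\<^sup>2 + (c - r) * (sin g)\<^sup>2"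
    proof -
      have "(c + r) * (cos g)\<^sup>2 + (c - r) * (sin g)\<^sup>2 = c + r * cos (2*g)"
        by (unfold c2) (simp add: algebra_simps sin_squared_eq)
      also have "\<dots> = a" by (simp only: g(1)) (simp add: c_def field_simps)
      finally show ?thesis by simp
    qed
    show "d = (c + r) * (sin g)\<^sup>2 + (c - r) * (cos g)\<^sup>2"
    proof -
      have "(c + r) * (sin g)\<^sup>2 + (c - r) * (cos g)\<^sup>2 = c - r * cos (2*g)"
        by (unfold c2) (simp add: algebra_simps sin_squared_eq)
      also have "\<dots> = d" by (simp only: g(1)) (simp add: c_def field_simps)
      finally show ?thesis by simp
    qed
    show "b = (c + r - (c - r)) * cos g * sin g"
      using g(2) unfolding s2 by (simp add: algebra_simps)
    then show "b = (c + r - (c - r)) * cos g * sin g" .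
  qed
  then show ?thesis using that g unfolding c_def r_def by blast
qed

lemma symR_0: "symR 0 a b = mk2 a 0 0 b"
  unfolding symR_mk2 by simp

lemma symR_pi4: "symR (pi/4) a b = mk2 ((a+b)/2) ((a-b)/2) ((a-b)/2) ((a+b)/2)"
  unfolding symR_mk2 cos_45 sin_45 mk2_eq_iff by (simp add: power_divide field_simps)

lemma qform_diff: "qform (X - Y) v = qform X v - qform Y v"
  unfolding qform_def by (simp add: matrix_vector_mult_diff_rdistrib sum_subtractf ring_distribs)

lemma qform_symR_real:
  "qform (symR g a b) (\<chi> i. if i = 1 then complex_of_real p else complex_of_real p') =
   complex_of_real (a * (cos g * p + sin g * p')\<^sup>2 + b * (sin g * p - cos g * p')\<^sup>2)"
  unfolding qform_symR by (simp add: power2_eq_square)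



theorem theorem4p5:
  fixes \<alpha> q :: real
  assumes "0 < \<alpha>" and "\<alpha> < 1" and "0 < q"
  shows "\<exists>A B :: complex^2^2. posdef_mat A \<and> posdef_mat B \<and>
           \<not> loewner_le (LE_mean \<alpha> A B) (power_mean \<alpha> q A B)"
proof -
  have a0: "0 < \<alpha>" and a1: "\<alpha> < 1" and q0: "0 < q" using assms by auto
  define P where "P = 8 * 4 powr (1/q)"
  define lb where "lb = ln P / \<alpha>"
  define \<beta> where "\<beta> = exp (q * lb)"
  define g0 where "g0 = \<alpha> * \<beta>"
  define E where "E = 2*g0 + 2/g0 + 1"
  define t where "t = ln E / q"
  define K where "K = 7*\<alpha>*t"
  define L where "L = 2*K/(1-\<alpha>)"
  define \<epsilon> where "\<epsilon> = exp (-(q*L))"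
  define A where "A = symR 0 1 (exp (-L))"
  define B where "B = symR (pi/4) (exp (lb+t)) (exp (lb-t))"
  have P0: "P > 0" unfolding P_def by simp
  have expP: "exp (\<alpha> * lb) = P" unfolding lb_def using a0 P0 by simp
  have b0: "\<beta> > 0" unfolding \<beta>_def by simp
  have g00: "g0 > 0" unfolding g0_def using a0 b0 by simp
  have E1: "E > 1" unfolding E_def using g00 by (simp add: add_pos_pos)
  have t0: "t > 0" unfolding t_def using E1 q0 by simp
  have expt: "exp (q * t) = E" unfolding t_def using q0 E1 by simp
  have K0: "K > 0" unfolding K_def using a0 t0 by simp
  have L0: "L > 0" unfolding L_def using K0 a1 by simp
  have KL: "(1-\<alpha>) * L = 2 * K" unfolding L_def using a1 by simp
  have e0: "\<epsilon> > 0" unfolding \<epsilon>_def by simp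
  have e1: "\<epsilon> \<le> 1" unfolding \<epsilon>_def using q0 L0 by simp

  have posA: "posdef_mat A" unfolding A_def by (rule posdef_symR) auto
  have posB: "posdef_mat B" unfolding B_def by (rule posdef_symR) auto
  have logA: "mat_log A = symR 0 0 (-L)" unfolding mat_log_def A_def mat_fun_symR by simp
  have logB: "mat_log B = symR (pi/4) (lb+t) (lb-t)" unfolding mat_log_def B_def mat_fun_symR by simp
  have powA: "mat_powr A q = symR 0 1 \<epsilon>"
    unfolding mat_powr_def A_def mat_fun_symR \<epsilon>_def exp_powr_real by (simp add: mult.commute)
  have pw1: "exp (lb+t) powr q = \<beta> * E"
    unfolding exp_powr_real \<beta>_def expt[symmetric] by (simp add: algebra_simps exp_add)
  have pw2: "exp (lb-t) powr q = \<beta> / E"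
    unfolding exp_powr_real \<beta>_def expt[symmetric] by (simp add: algebra_simps exp_diff)
  have powB: "mat_powr B q = symR (pi/4) (\<beta>*E) (\<beta>/E)"
    unfolding mat_powr_def B_def mat_fun_symR pw1 pw2 by simp

  define Z where "Z = (1 - \<alpha>) *\<^sub>R mat_log A + \<alpha> *\<^sub>R mat_log B"
  have Zm: "Z = mk2 (\<alpha>*lb) (\<alpha>*t) (\<alpha>*t) (\<alpha>*lb - (1-\<alpha>)*L)"
    unfolding Z_def logA logB symR_0 symR_pi4 mk2_scaleR mk2_add mk2_eq_iff
    by (simp add: algebra_simps)
  define S11 where "S11 = (1-\<alpha>) + \<alpha> * ((\<beta>*E + \<beta>/E)/2)"
  define S12 where "S12 = \<alpha> * ((\<beta>*E - \<beta>/E)/2)"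
  define S22 where "S22 = (1-\<alpha>)*\<epsilon> + \<alpha> * ((\<beta>*E + \<beta>/E)/2)"
  define S where "S = (1 - \<alpha>) *\<^sub>R mat_powr A q + \<alpha> *\<^sub>R mat_powr B q"
  have Sm: "S = mk2 S11 S12 S12 S22"
    unfolding S_def powA powB symR_0 symR_pi4 mk2_scaleR mk2_add mk2_eq_iff S11_def S12_def S22_def
    by (simp add: algebra_simps)

  define cZ where "cZ = ((\<alpha>*lb) + (\<alpha>*lb - (1-\<alpha>)*L))/2"
  define rZ where "rZ = sqrt (((\<alpha>*lb - (\<alpha>*lb - (1-\<alpha>)*L))/2)\<^sup>2 + (\<alpha>*t)\<^sup>2)"
  obtain gZ where gZ: "Z = symR gZ (cZ + rZ) (cZ - rZ)"
      "rZ * cos (2*gZ) = (\<alpha>*lb - (\<alpha>*lb - (1-\<alpha>)*L))/2" "rZ * sin (2*gZ) = \<alpha>*t"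
    using sym_decomp[of "\<alpha>*lb" "\<alpha>*t" "\<alpha>*lb - (1-\<alpha>)*L"] unfolding Zm cZ_def rZ_def by blast
  define cS where "cS = (S11 + S22)/2"
  define rS where "rS = sqrt (((S11 - S22)/2)\<^sup>2 + S12\<^sup>2)"
  obtain gS where gS: "S = symR gS (cS + rS) (cS - rS)"
      "rS * cos (2*gS) = (S11 - S22)/2" "rS * sin (2*gS) = S12"
    using sym_decomp[of S11 S12 S22] unfolding Sm cS_def rS_def by blast

  have LE: "LE_mean \<alpha> A B = symR gZ (exp (cZ + rZ)) (exp (cZ - rZ))"
    unfolding LE_mean_def Z_def[symmetric] gZ(1) mat_exp_def mat_fun_symR ..
  have PM: "power_mean \<alpha> q A B = symR gS ((cS + rS) powr (1/q)) ((cS - rS) powr (1/q))"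
    unfolding power_mean_def S_def[symmetric] gS(1) unfolding mat_powr_def mat_fun_symR ..

  define v :: "complex^2" where "v = (\<chi> i. if i = 1 then complex_of_real (sin gS) else complex_of_real (- cos gS))"
  have qPM: "Re (qform (power_mean \<alpha> q A B) v) = (cS - rS) powr (1/q)"
    unfolding PM v_def qform_symR_real by (simp add: algebra_simps)
  have qLE: "Re (qform (LE_mean \<alpha> A B) v) \<ge> exp (cZ + rZ) * (sin (gS - gZ))\<^sup>2"
    unfolding LE v_def qform_symR_real sin_diff
    by (simp add: algebra_simps)
  have hK: "(\<alpha>*lb - (\<alpha>*lb - (1-\<alpha>)*L))/2 = K" using KL by simp
  have rZdef: "rZ = sqrt (K\<^sup>2 + (\<alpha>*t)\<^sup>2)" unfolding rZ_def hK ..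
  have rZK: "rZ \<ge> K" unfolding rZdef by (rule real_le_rsqrt) simp
  have rZ0: "rZ > 0" using rZK K0 by linarith
  have cZr: "cZ + rZ \<ge> \<alpha>*lb" unfolding cZ_def using KL rZK by (simp add: field_simps)
  have cosZ: "cos (2*gZ) = K / rZ" using gZ(2) rZ0 unfolding hK by (simp add: field_simps)
  have sinZ: "sin (2*gZ) = \<alpha>*t / rZ" using gZ(3) rZ0 by (simp add: field_simps)
  have cosZ0: "cos (2*gZ) \<ge> 0" unfolding cosZ using K0 rZ0 by simp
  have sinZ0: "sin (2*gZ) \<ge> 0" unfolding sinZ using a0 t0 rZ0 by simp
  have sinZ1: "sin (2*gZ) \<le> 1/7"
  proof -
    have "\<alpha>*t / rZ \<le> \<alpha>*t / K"
      using rZK K0 a0 t0 by (intro divide_left_mono) auto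
    also have "\<dots> = 1/7" unfolding K_def using a0 t0 by simp
    finally show ?thesis unfolding sinZ .
  qed
  define h where "h = (E + 1/E)/2"
  define sh where "sh = (E - 1/E)/2"
  have hs: "h\<^sup>2 - sh\<^sup>2 = 1" unfolding h_def sh_def using E1 by (simp add: power2_eq_square field_simps)
  have S11h: "S11 = (1-\<alpha>) + g0*h" unfolding S11_def g0_def h_def by (simp add: field_simps)
  have S22h: "S22 = (1-\<alpha>)*\<epsilon> + g0*h" unfolding S22_def g0_def h_def by (simp add: field_simps)
  have S12s: "S12 = g0 * sh" unfolding S12_def g0_def sh_def by (simp add: field_simps)
  have invE: "1/E \<le> 1" "1/E > 0" using E1 by auto
  have hge: "h \<ge> g0 + 1/g0" unfolding h_def E_def using invE E_def by simp
  have sge: "sh \<ge> 1/g0"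
  proof -
    have "sh \<ge> (E - 1)/2" unfolding sh_def using invE by (simp add: field_simps)
    then show ?thesis unfolding E_def using g00 by simp
  qed
  have S12ge: "S12 \<ge> 1" unfolding S12s using sge g00
    by (metis divide_le_eq mult.commute)
  have rSS12: "rS \<ge> S12" unfolding rS_def by (rule real_le_rsqrt) simp
  have rS1: "rS \<ge> 1" using rSS12 S12ge by linarith
  have rS0: "rS > 0" using rS1 by linarith
  have d12: "(S11 - S22)/2 = (1-\<alpha>)*(1-\<epsilon>)/2" unfolding S11h S22h by (simp add: algebra_simps)
  have d12a: "(S11 - S22)/2 \<ge> 0" unfolding d12 using a1 e1 by simp
  have d12b: "(S11 - S22)/2 \<le> 1/2"
  proof -
    have "(1-\<alpha>)*(1-\<epsilon>) \<le> 1 * 1" using a0 a1 e0 e1 by (intro mult_mono) auto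
    then show ?thesis unfolding d12 by simp
  qed
  have cosS: "cos (2*gS) = ((S11 - S22)/2) / rS" using gS(2) rS0 by (simp add: field_simps)
  have sinS: "sin (2*gS) = S12 / rS" using gS(3) rS0 by (simp add: field_simps)
  have cosS0: "cos (2*gS) \<ge> 0" unfolding cosS using d12a rS0 by simp
  have cosS1: "cos (2*gS) \<le> 1/2"
  proof -
    have "((S11 - S22)/2) / rS \<le> ((S11 - S22)/2) / 1"
      using d12a rS1 by (intro divide_left_mono) auto
    then have "((S11 - S22)/2) / rS \<le> (S11 - S22)/2" by simp
    then show ?thesis unfolding cosS using d12b by linarith
  qed
  have sinS0: "sin (2*gS) \<ge> 0" unfolding sinS using S12ge rS0 by simp
  have X: "cos (2*gS) * cos (2*gZ) + sin (2*gS) * sin (2*gZ) \<le> 1/2 + 1/7"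
  proof -
    have "cos (2*gS) * cos (2*gZ) \<le> 1/2 * 1"
      using cosS0 cosS1 cosZ0 cos_le_one by (intro mult_mono) auto
    moreover have "sin (2*gS) * sin (2*gZ) \<le> 1 * (1/7)"
      using sinS0 sinZ0 sinZ1 sin_le_one by (intro mult_mono) auto
    ultimately show ?thesis by linarith
  qed
  have sin2: "(sin (gS - gZ))\<^sup>2 \<ge> 5/28"
  proof -
    have "cos (2*(gS - gZ)) = 1 - 2 * (sin (gS - gZ))\<^sup>2" by (rule cos_double_sin)
    moreover have "cos (2*(gS - gZ)) = cos (2*gS) * cos (2*gZ) + sin (2*gS) * sin (2*gZ)"
      using cos_diff[of "2*gS" "2*gZ"] by (simp add: algebra_simps)
    ultimately show ?thesis using X by linarith
  qed
  have LEbound: "Re (qform (LE_mean \<alpha> A B) v) \<ge> P * (5/28)"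
  proof -
    have "P \<le> exp (cZ + rZ)" unfolding expP[symmetric] using cZr by simp
    then have "P * (5/28) \<le> exp (cZ + rZ) * (sin (gS - gZ))\<^sup>2"
      using sin2 P0 by (intro mult_mono) auto
    then show ?thesis using qLE by linarith
  qed
  define det where "det = S11 * S22 - S12\<^sup>2"
  have det_eq: "det = (1-\<alpha>)\<^sup>2*\<epsilon> + (1-\<alpha>)*g0*h*(1+\<epsilon>) + g0\<^sup>2"
  proof -
    have "det = (1-\<alpha>)\<^sup>2*\<epsilon> + (1-\<alpha>)*g0*h*(1+\<epsilon>) + g0\<^sup>2 * (h\<^sup>2 - sh\<^sup>2)"
      unfolding det_def S11h S22h S12s by (simp add: power2_eq_square algebra_simps)
    then show ?thesis unfolding hs by simp
  qed
  have g0h: "g0 * h \<ge> 1"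
  proof -
    have "h \<ge> 1/g0" using hge g00 by (smt (verit) divide_pos_pos)
    then show ?thesis using g00 by (simp add: divide_le_eq mult.commute)
  qed
  have hg0: "h \<ge> g0" using hge g00 by (smt (verit) divide_pos_pos)
  have det0: "det > 0"
  proof -
    have f1: "(1-\<alpha>)\<^sup>2*\<epsilon> > 0" using a1 e0 by simp
    have gh0: "g0*h > 0" using g0h by linarith
    have "(1-\<alpha>) > 0" "1+\<epsilon> > 0" using a1 e0 by auto
    then have "(1-\<alpha>)*(g0*h)*(1+\<epsilon>) > 0" using gh0 by (metis mult_pos_pos)
    then have f2: "(1-\<alpha>)*g0*h*(1+\<epsilon>) > 0" by (simp add: mult.assoc)
    have f3: "g0\<^sup>2 > 0" using g00 by simp
    show ?thesis unfolding det_eq using f1 f2 f3 by linarith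
  qed
  have det4: "det \<le> 4 * (g0 * h)"
  proof -
    have t1: "(1-\<alpha>)\<^sup>2*\<epsilon> \<le> 1"
    proof -
      have "(1-\<alpha>)\<^sup>2 \<le> 1" using a0 a1 by (simp add: power_le_one abs_le_iff)
      then show ?thesis using e0 e1 by (metis mult_le_one zero_le_power2 less_imp_le)
    qed
    have t2: "(1-\<alpha>)*g0*h*(1+\<epsilon>) \<le> 2 * (g0*h)"
    proof -
      have "(1-\<alpha>)*(1+\<epsilon>) \<le> 1 * 2" using a0 a1 e0 e1 by (intro mult_mono) auto
      then have "((1-\<alpha>)*(1+\<epsilon>)) * (g0*h) \<le> 2 * (g0*h)" using g0h by (intro mult_right_mono) auto
      then show ?thesis by (simp add: algebra_simps)
    qed
    have t3: "g0\<^sup>2 \<le> g0 * h" unfolding power2_eq_square using hg0 g00 by (intro mult_left_mono) auto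
    show ?thesis unfolding det_eq using t1 t2 t3 g0h by linarith
  qed
  have cSge: "cS \<ge> g0 * h"
  proof -
    have "(1-\<alpha>)*\<epsilon> \<ge> 0" using a1 e0 by simp
    then show ?thesis unfolding cS_def S11h S22h using a1 by simp
  qed
  have rS2: "rS\<^sup>2 = ((S11 - S22)/2)\<^sup>2 + S12\<^sup>2" unfolding rS_def by simp
  have prod: "(cS - rS) * (cS + rS) = det"
  proof -
    have "(cS - rS) * (cS + rS) = cS\<^sup>2 - rS\<^sup>2" by (simp add: power2_eq_square algebra_simps)
    also have "\<dots> = det" unfolding rS2 cS_def det_def by (simp add: power2_eq_square field_simps)
    finally show ?thesis .
  qed
  have cSr0: "cS + rS > 0" using cSge g0h rS0 by linarith
  have low0: "cS - rS \<ge> 0"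
  proof -
    have "(cS - rS) * (cS + rS) > 0" using prod det0 by simp
    then show ?thesis using cSr0 by (simp add: zero_less_mult_iff)
  qed
  have low4: "cS - rS \<le> 4"
  proof (rule ccontr)
    assume "\<not> cS - rS \<le> 4"
    then have "(cS - rS) * (cS + rS) > 4 * (cS + rS)" using cSr0 by (intro mult_strict_right_mono) auto
    then have "det > 4 * (cS + rS)" using prod by simp
    then have "det > 4 * cS + 4 * rS" by (simp add: algebra_simps)
    then show False using det4 cSge rS0 by linarith
  qed
  have PMbound: "Re (qform (power_mean \<alpha> q A B) v) \<le> 4 powr (1/q)"
    unfolding qPM using low0 low4 q0 by (intro powr_mono2) auto
  have neg: "Re (qform (power_mean \<alpha> q A B - LE_mean \<alpha> A B) v) < 0"
  proof -
    have "Re (qform (power_mean \<alpha> q A B - LE_mean \<alpha> A B) v) =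
          Re (qform (power_mean \<alpha> q A B) v) - Re (qform (LE_mean \<alpha> A B) v)"
      unfolding qform_diff by simp
    also have "\<dots> \<le> 4 powr (1/q) - P * (5/28)" using PMbound LEbound by linarith
    also have "\<dots> < 0" unfolding P_def by simp
    finally show ?thesis .
  qed
  have "\<not> loewner_le (LE_mean \<alpha> A B) (power_mean \<alpha> q A B)"
    unfolding loewner_le_def psd_mat_def using neg by (meson not_le)
  then show ?thesis using posA posB by blast
qed

end
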